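(* Let $\mathcal{G}$ be an additive arithmetical semigroup satisfying Axiom $A^{\#}$ with constants $c_{\mathcal{G}}>0$, $q>1$, $0\le\eta<1$, and $Z_{\mathcal{G}}(-q^{-1})\neq0$. If $S\subseteq\mathcal{P}$ has natural density $\delta(S)$, then $$\sum_{\partial(g)=n}Q_S(g)=c_{\mathcal{G}}\,\delta(S)\,q^{n}+o(q^{n})\qquad(n\to\infty).$$
   Context: An additive arithmetical semigroup is a commutative monoid $\mathcal{G}$ (written additively, identity $e_{\mathcal{G}}$) freely generated by a countable set $\mathcal{P}$ of primes, with an additive degree map $\partial\colon\mathcal{G}\to\mathbb{Z}_{\ge0}$, $\partial(e_{\mathcal{G}})=0$, $\partial(P)>0$ for primes, and finitely many elements of each degree. Axiom $A^{\#}$: $\#\{g:\partial(g)=n\}=c_{\mathcal{G}}q^n+O(q^{\eta n})$. $Z_{\mathcal{G}}(z)=\prod_{P\in\mathcal{P}}(1-z^{\partial(P)})^{-1}$ (meromorphically continued). Natural density: $\delta(S)=\lim_{n\to\infty}\#\{P\in S:\partial(P)=n\}/\#\{P\in\mathcal{P}:\partial(P)=n\}$. $P\mid g$ means $g=P+r$ for some $r\in\mathcal{G}$. $d^+(g)=\max\{\partial(P):P\in\mathcal{P},P\mid g\}$ and $d^+(e_{\mathcal{G}})=0$. $Q_S(g)=\#\{P\in S: P\mid g,\ \partial(P)=d^+(g)\}$. *)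

theory Defs
  imports "HOL-Analysis.Analysis" "HOL-Library.Multiset" "HOL-Library.Landau_Symbols"
begin

text \<open>The additive arithmetical semigroup freely generated by the primes (elements of
  the type 'p) is modelled as the free commutative monoid 'p multiset; the degree
  of a prime is given by dp, extended additively.\<close>

definition degG :: "('p \<Rightarrow> nat) \<Rightarrow> 'p multiset \<Rightarrow> nat" where
  "degG dp g = sum_mset (image_mset dp g)"

definition Gcount :: "('p \<Rightarrow> nat) \<Rightarrow> nat \<Rightarrow> nat" where
  "Gcount dp n = card {g. degG dp g = n}"

definition Pcount :: "('p \<Rightarrow> nat) \<Rightarrow> nat \<Rightarrow> nat" where
  "Pcount dp n = card {P. dp P = n}"

text \<open>Largest degree of a prime divisor (0 for the identity).  P divides g iff P in g.\<close>
definition dplus :: "('p \<Rightarrow> nat) \<Rightarrow> 'p multiset \<Rightarrow> nat" where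
  "dplus dp g = (if g = {#} then 0 else Max (dp ` set_mset g))"

definition QS :: "('p \<Rightarrow> nat) \<Rightarrow> 'p set \<Rightarrow> 'p multiset \<Rightarrow> nat" where
  "QS dp S g = card {P \<in> S. P \<in># g \<and> dp P = dplus dp g}"

text \<open>Euler product Z_G(z) = prod over primes (1 - z^deg P)^(-1), grouping the
  finitely many primes of each degree m.\<close>
definition ZG :: "('p \<Rightarrow> nat) \<Rightarrow> complex \<Rightarrow> complex" where
  "ZG dp z = (\<Prod>m. inverse ((1 - z ^ Suc m) ^ Pcount dp (Suc m)))"

definition has_natural_density :: "('p \<Rightarrow> nat) \<Rightarrow> 'p set \<Rightarrow> real \<Rightarrow> bool" where
  "has_natural_density dp S d \<longleftrightarrow>
     ((\<lambda>n. real (card {P \<in> S. dp P = n}) / real (Pcount dp n)) \<longlongrightarrow> d) sequentially"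

end

theory Submission
  imports Defs "HOL-Complex_Analysis.Complex_Analysis"
begin

lemma degG_empty [simp]: "degG dp {#} = 0"
  by (simp add: degG_def)
lemma degG_add [simp]: "degG dp (a + b) = degG dp a + degG dp b"
  by (simp add: degG_def)
lemma degG_add_mset [simp]: "degG dp (add_mset x a) = dp x + degG dp a"
  by (simp add: degG_def)
lemma degG_single [simp]: "degG dp {#x#} = dp x"
  by (simp add: degG_def)
lemma degG_replicate [simp]: "degG dp (replicate_mset j x) = j * dp x"
  by (induction j) auto

lemma degG_sum_count:
  assumes "finite A" "set_mset g \<subseteq> A"
  shows "(\<Sum>P\<in>A. count g P * dp P) = degG dp g"
  using assms(2)
proof (induction g)
  case empty then show ?case by simp
next
  case (add x g)
  have xA: "x \<in> A" using add.prems by auto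
  have "(\<Sum>P\<in>A. count (add_mset x g) P * dp P) = (\<Sum>P\<in>A. count g P * dp P + (if P = x then dp x else 0))"
    by (intro sum.cong) auto
  also have "\<dots> = (\<Sum>P\<in>A. count g P * dp P) + dp x"
    using assms(1) xA by (simp add: sum.distrib)
  finally show ?case using add by simp
qed

lemma degG_mono:
  assumes "h \<subseteq># g" shows "degG dp h \<le> degG dp g"
proof -
  have "g = h + (g - h)" using assms by (simp add: subset_mset.add_diff_inverse)
  then show ?thesis by (metis degG_add le_add1)
qed

lemma degG_diff:
  assumes "h \<subseteq># g" shows "degG dp (g - h) = degG dp g - degG dp h"
proof -
  have "g = h + (g - h)" using assms by (simp add: subset_mset.add_diff_inverse)
  then have "degG dp g = degG dp h + degG dp (g - h)" by (metis degG_add)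
  then show ?thesis by simp
qed

locale aas =
  fixes dp :: "'p \<Rightarrow> nat"
  assumes deg_pos: "\<And>P. dp P > 0"
    and fin: "\<And>n. finite {g. degG dp g = n}"
begin

definition Gs where "Gs n = {g. degG dp g = n}"
definition G where "G n = card (Gs n)"
definition PS where "PS n = {P. dp P = n}"
definition Ple where "Ple n = {P. dp P \<le> n}"
definition Nset where "Nset m k = {r. degG dp r = k \<and> (\<forall>Q\<in>#r. dp Q \<le> m)}"
definition N where "N m k = card (Nset m k)"
definition Lam where "Lam k = (\<Sum>P\<in>Ple k. if dp P dvd k then dp P else 0)"

lemma finite_Gs [simp]: "finite (Gs n)" using fin by (simp add: Gs_def)

lemma G_eq: "G n = Gcount dp n" by (simp add: G_def Gs_def Gcount_def)

lemma degG_zero_iff: "degG dp g = 0 \<longleftrightarrow> g = {#}"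
proof
  assume "degG dp g = 0"
  show "g = {#}"
  proof (rule ccontr)
    assume "g \<noteq> {#}"
    then obtain x h where "g = add_mset x h" by (metis multiset_cases)
    then have "degG dp g \<ge> dp x" by simp
    with deg_pos[of x] \<open>degG dp g = 0\<close> show False by simp
  qed
qed simp

lemma G0: "G 0 = 1"
proof -
  have "Gs 0 = {{#}}" by (auto simp: Gs_def degG_zero_iff)
  then show ?thesis by (simp add: G_def)
qed

lemma mem_deg_le: assumes "P \<in># g" shows "dp P \<le> degG dp g"
proof -
  from assms obtain h where "g = add_mset P h" by (metis multi_member_split)
  then show ?thesis by simp
qed

lemma count_deg_le: "count g P * dp P \<le> degG dp g"
proof -
  have "replicate_mset (count g P) P \<subseteq># g"
    by (simp add: subseteq_mset_def count_replicate_mset)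
  from degG_mono[OF this, of dp] show ?thesis by simp
qed

lemma finite_PS [simp]: "finite (PS n)"
proof -
  have "(\<lambda>P. {#P#}) ` PS n \<subseteq> Gs n" by (auto simp: PS_def Gs_def)
  then have "finite ((\<lambda>P. {#P#}) ` PS n)" by (rule finite_subset) simp
  then show ?thesis by (rule finite_imageD) (auto simp: inj_on_def)
qed

lemma Ple_eq: "Ple n = (\<Union>k\<in>{..n}. PS k)" by (auto simp: Ple_def PS_def)
lemma finite_Ple [simp]: "finite (Ple n)" by (simp add: Ple_eq)

lemma Pcount_eq: "Pcount dp n = card (PS n)" by (simp add: Pcount_def PS_def)

lemma Nset_sub: "Nset m k \<subseteq> Gs k" by (auto simp: Nset_def Gs_def)
lemma finite_Nset [simp]: "finite (Nset m k)" using Nset_sub finite_Gs finite_subset by blast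
lemma N_le_G: "N m k \<le> G k" unfolding N_def G_def by (rule card_mono[OF finite_Gs Nset_sub])

lemma N_poly: "N m k \<le> (k + 1) ^ card (Ple m)"
proof -
  let ?f = "\<lambda>r. restrict (count r) (Ple m)"
  have inj: "inj_on ?f (Nset m k)"
  proof (rule inj_onI)
    fix r r' assume r: "r \<in> Nset m k" and r': "r' \<in> Nset m k" and eq: "?f r = ?f r'"
    show "r = r'"
    proof (rule multiset_eqI)
      fix Q show "count r Q = count r' Q"
      proof (cases "Q \<in> Ple m")
        case True then show ?thesis using fun_cong[OF eq, of Q] by simp
      next
        case False
        then have "Q \<notin># r" "Q \<notin># r'" using r r' by (auto simp: Nset_def Ple_def)
        then show ?thesis by (simp add: not_in_iff)
      qed
    qed
  qed
  have sub: "?f ` Nset m k \<subseteq> Ple m \<rightarrow>\<^sub>E {0..k}"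
  proof
    fix x assume "x \<in> ?f ` Nset m k"
    then obtain r where r: "r \<in> Nset m k" and x: "x = ?f r" by auto
    have "count r P \<le> k" for P
    proof -
      have "count r P * dp P \<le> k" using count_deg_le[of r P] r by (simp add: Nset_def)
      moreover have "count r P \<le> count r P * dp P" using deg_pos[of P] by simp
      ultimately show ?thesis by linarith
    qed
    then show "x \<in> Ple m \<rightarrow>\<^sub>E {0..k}" using x by auto
  qed
  have "N m k = card (?f ` Nset m k)" unfolding N_def by (simp add: card_image[OF inj])
  also have "\<dots> \<le> card (Ple m \<rightarrow>\<^sub>E {0..k::nat})"
    by (rule card_mono[OF _ sub]) (simp add: finite_PiE)
  also have "\<dots> = (k + 1) ^ card (Ple m)" by (simp add: card_funcsetE)
  finally show ?thesis .
qed

end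

context aas begin

lemma card_count_ge:
  assumes "j * dp P \<le> n"
  shows "card {g\<in>Gs n. j \<le> count g P} = G (n - j * dp P)"
proof -
  let ?f = "\<lambda>r. r + replicate_mset j P"
  have "{g\<in>Gs n. j \<le> count g P} = ?f ` Gs (n - j * dp P)"
  proof (intro equalityI subsetI)
    fix g assume g: "g \<in> {g\<in>Gs n. j \<le> count g P}"
    have sub: "replicate_mset j P \<subseteq># g" using g by (simp add: subseteq_mset_def count_replicate_mset)
    have "g = ?f (g - replicate_mset j P)" using sub by (simp add: subset_mset.diff_add)
    moreover have "g - replicate_mset j P \<in> Gs (n - j * dp P)"
      using g degG_diff[OF sub, of dp] by (simp add: Gs_def)
    ultimately show "g \<in> ?f ` Gs (n - j * dp P)" by blast
  next
    fix g assume "g \<in> ?f ` Gs (n - j * dp P)"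
    then obtain r where r: "r \<in> Gs (n - j * dp P)" "g = ?f r" by auto
    then show "g \<in> {g\<in>Gs n. j \<le> count g P}" using assms by (auto simp: Gs_def)
  qed
  moreover have "inj_on ?f (Gs (n - j * dp P))" by (auto simp: inj_on_def)
  ultimately show ?thesis by (simp add: G_def card_image)
qed

lemma sum_count:
  "(\<Sum>g\<in>Gs n. count g P) = (\<Sum>j\<in>{1..n div dp P}. G (n - j * dp P))"
proof -
  let ?J = "{1..n div dp P}"
  have d: "dp P > 0" by (rule deg_pos)
  have c: "count g P = card {j\<in>?J. j \<le> count g P}" if "g \<in> Gs n" for g
  proof -
    have "count g P * dp P \<le> n" using count_deg_le[of g P] that by (simp add: Gs_def)
    then have "count g P \<le> n div dp P" using d by (simp add: less_eq_div_iff_mult_less_eq)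
    then have "{j\<in>?J. j \<le> count g P} = {1..count g P}" by auto
    then show ?thesis by simp
  qed
  have "(\<Sum>g\<in>Gs n. count g P) = (\<Sum>g\<in>Gs n. card {j\<in>?J. j \<le> count g P})"
    by (intro sum.cong refl c)
  also have "\<dots> = (\<Sum>g\<in>Gs n. \<Sum>j\<in>?J. if j \<le> count g P then 1 else 0)"
    by (intro sum.cong refl) (simp only: card_eq_sum sum.inter_filter[OF finite_atLeastAtMost])
  also have "\<dots> = (\<Sum>j\<in>?J. \<Sum>g\<in>Gs n. if j \<le> count g P then 1 else 0)"
    by (rule sum.swap)
  also have "\<dots> = (\<Sum>j\<in>?J. card {g\<in>Gs n. j \<le> count g P})"
    by (intro sum.cong refl) (simp only: card_eq_sum sum.inter_filter[OF finite_Gs])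
  also have "\<dots> = (\<Sum>j\<in>?J. G (n - j * dp P))"
  proof (intro sum.cong refl card_count_ge)
    fix j assume "j \<in> ?J"
    then have "j \<le> n div dp P" by simp
    then show "j * dp P \<le> n" using d by (simp add: less_eq_div_iff_mult_less_eq)
  qed
  finally show ?thesis .
qed

lemma recurrence: "n * G n = (\<Sum>k\<in>{1..n}. Lam k * G (n - k))"
proof -
  have "n * G n = (\<Sum>g\<in>Gs n. degG dp g)" by (simp add: Gs_def G_def)
  also have "\<dots> = (\<Sum>g\<in>Gs n. \<Sum>P\<in>Ple n. count g P * dp P)"
  proof (intro sum.cong refl)
    fix g assume "g \<in> Gs n"
    then have "set_mset g \<subseteq> Ple n" using mem_deg_le by (fastforce simp: Gs_def Ple_def)
    then show "degG dp g = (\<Sum>P\<in>Ple n. count g P * dp P)" by (simp add: degG_sum_count)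
  qed
  also have "\<dots> = (\<Sum>P\<in>Ple n. dp P * (\<Sum>g\<in>Gs n. count g P))"
    by (subst sum.swap) (simp add: sum_distrib_left mult.commute)
  also have "\<dots> = (\<Sum>P\<in>Ple n. dp P * (\<Sum>j\<in>{1..n div dp P}. G (n - j * dp P)))"
    by (simp add: sum_count)
  also have "\<dots> = (\<Sum>P\<in>Ple n. dp P * (\<Sum>k\<in>{k\<in>{1..n}. dp P dvd k}. G (n - k)))"
  proof (rule sum.cong[OF refl])
    fix P
    have d: "dp P > 0" by (rule deg_pos)
    have "{k\<in>{1..n}. dp P dvd k} = (\<lambda>j. j * dp P) ` {1..n div dp P}"
    proof (intro equalityI subsetI)
      fix k assume "k \<in> {k\<in>{1..n}. dp P dvd k}"
      then obtain j where "k = dp P * j" "1 \<le> k" "k \<le> n" by (auto elim!: dvdE)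
      then have j: "k = j * dp P" "1 \<le> k" "k \<le> n" by (auto simp: mult.commute)
      then have "1 \<le> j" by (cases j) auto
      moreover have "j \<le> n div dp P" using j d by (simp add: less_eq_div_iff_mult_less_eq)
      ultimately show "k \<in> (\<lambda>j. j * dp P) ` {1..n div dp P}" using j by auto
    next
      fix k assume "k \<in> (\<lambda>j. j * dp P) ` {1..n div dp P}"
      then obtain j where "j \<in> {1..n div dp P}" "k = j * dp P" by (rule imageE)
      then have j: "k = j * dp P" "1 \<le> j" "j \<le> n div dp P" by auto
      then have "j * dp P \<le> n" using d by (simp add: less_eq_div_iff_mult_less_eq)
      moreover have "1 \<le> j * dp P" using j d by simp
      ultimately show "k \<in> {k\<in>{1..n}. dp P dvd k}" using j by auto
    qed
    moreover have "inj_on (\<lambda>j. j * dp P) {1..n div dp P}" using d by (auto simp: inj_on_def)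
    ultimately have "(\<Sum>j\<in>{1..n div dp P}. G (n - j * dp P)) = (\<Sum>k\<in>{k\<in>{1..n}. dp P dvd k}. G (n - k))"
      by (simp add: sum.reindex)
    then show "dp P * (\<Sum>j\<in>{1..n div dp P}. G (n - j * dp P)) = dp P * (\<Sum>k\<in>{k\<in>{1..n}. dp P dvd k}. G (n - k))"
      by simp
  qed
  also have "\<dots> = (\<Sum>P\<in>Ple n. \<Sum>k\<in>{1..n}. if dp P dvd k then dp P * G (n - k) else 0)"
    unfolding sum_distrib_left by (rule sum.cong[OF refl]) (simp only: sum.inter_filter[OF finite_atLeastAtMost])
  also have "\<dots> = (\<Sum>k\<in>{1..n}. \<Sum>P\<in>Ple n. if dp P dvd k then dp P * G (n - k) else 0)"
    by (rule sum.swap)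
  also have "\<dots> = (\<Sum>k\<in>{1..n}. Lam k * G (n - k))"
  proof (intro sum.cong refl)
    fix k assume k: "k \<in> {1..n}"
    have "(\<Sum>P\<in>Ple n. if dp P dvd k then dp P * G (n - k) else 0)
        = (\<Sum>P\<in>Ple k. if dp P dvd k then dp P * G (n - k) else 0)"
    proof (rule sum.mono_neutral_right)
      show "Ple k \<subseteq> Ple n" using k by (auto simp: Ple_def)
      show "\<forall>P\<in>Ple n - Ple k. (if dp P dvd k then dp P * G (n - k) else 0) = 0"
        using k by (auto simp: Ple_def dest: dvd_imp_le)
    qed simp
    also have "\<dots> = Lam k * G (n - k)"
      unfolding Lam_def sum_distrib_right by (rule sum.cong[OF refl]) simp
    finally show "(\<Sum>P\<in>Ple n. if dp P dvd k then dp P * G (n - k) else 0) = Lam k * G (n - k)" .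
  qed
  finally show ?thesis .
qed

lemma Lam_ge: "n * card (PS n) \<le> Lam n"
proof -
  have "(\<Sum>P\<in>PS n. if dp P dvd n then dp P else 0) = (\<Sum>P\<in>PS n. n)"
    by (rule sum.cong[OF refl]) (simp add: PS_def)
  then have "n * card (PS n) = (\<Sum>P\<in>PS n. if dp P dvd n then dp P else 0)"
    by simp
  also have "\<dots> \<le> Lam n" unfolding Lam_def
    by (rule sum_mono2[OF finite_Ple]) (auto simp: PS_def Ple_def)
  finally show ?thesis .
qed

lemma Lam_le: "Lam n \<le> n * G n"
proof (cases n)
  case 0 then show ?thesis by (simp add: Lam_def Ple_def)
next
  case (Suc m)
  have "Lam n * G (n - n) \<le> (\<Sum>k\<in>{1..n}. Lam k * G (n - k))"
    by (rule member_le_sum) (use Suc in auto)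
  then show ?thesis using G0 recurrence[of n] by simp
qed

lemma Lam0: "Lam 0 = 0" by (simp add: Lam_def Ple_def)

end

context aas begin

definition Xg where "Xg S g = {P\<in>S. P \<in># g \<and> dp P = dplus dp g}"
definition PSS where "PSS S m = {P\<in>S. dp P = m}"

lemma QS_eq: "QS dp S g = card (Xg S g)" by (simp add: QS_def Xg_def)

lemma finite_Xg [simp]: "finite (Xg S g)"
  by (rule finite_subset[of _ "set_mset g"]) (auto simp: Xg_def)

lemma dplus_iff:
  assumes "P \<in># g"
  shows "dp P = dplus dp g \<longleftrightarrow> (\<forall>Q\<in>#g. dp Q \<le> dp P)"
proof -
  have ne: "g \<noteq> {#}" using assms by auto
  have "dplus dp g = Max (dp ` set_mset g)" using ne by (simp add: dplus_def)
  moreover have "Max (dp ` set_mset g) = dp P \<longleftrightarrow> (\<forall>Q\<in>#g. dp Q \<le> dp P)"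
    using assms by (subst Max_eq_iff) auto
  ultimately show ?thesis by auto
qed

lemma Xg_deg: assumes "P \<in> Xg S g" "g \<in> Gs n" shows "1 \<le> dp P" "dp P \<le> n"
  using assms deg_pos[of P] mem_deg_le[of P g] by (auto simp: Xg_def Gs_def)

lemma T_formula:
  "(\<Sum>g\<in>Gs n. QS dp S g) = (\<Sum>m\<in>{1..n}. card (PSS S m) * N m (n - m))"
proof -
  define A where "A m = {(g,P). g \<in> Gs n \<and> P \<in> Xg S g \<and> dp P = m}" for m
  have "(\<Sum>g\<in>Gs n. QS dp S g) = card (SIGMA g:Gs n. Xg S g)"
    by (simp add: QS_eq card_SigmaI)
  also have "(SIGMA g:Gs n. Xg S g) = (\<Union>m\<in>{1..n}. A m)"
    using Xg_deg by (fastforce simp: A_def)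
  also have "card \<dots> = (\<Sum>m\<in>{1..n}. card (A m))"
  proof (rule card_UN_disjoint)
    show "\<forall>i\<in>{1..n}. finite (A i)"
      by (auto intro: finite_subset[of _ "SIGMA g:Gs n. Xg S g"] simp: A_def)
  qed (auto simp: A_def)
  also have "\<dots> = (\<Sum>m\<in>{1..n}. card (PSS S m) * N m (n - m))"
  proof (rule sum.cong[OF refl])
    fix m assume m: "m \<in> {1..n}"
    define h where "h = (\<lambda>(P::'p, r::'p multiset). (r + {#P#}, P))"
    have "A m = h ` (PSS S m \<times> Nset m (n - m))"
    proof (intro equalityI subsetI)
      fix x assume "x \<in> A m"
      then obtain g P where x: "x = (g, P)" "g \<in> Gs n" "P \<in> Xg S g" "dp P = m"
        by (auto simp: A_def)
      have Pg: "P \<in># g" using x by (simp add: Xg_def)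
      have g: "g = (g - {#P#}) + {#P#}" using Pg by simp
      have all: "\<forall>Q\<in>#g. dp Q \<le> dp P" using x Pg dplus_iff by (auto simp: Xg_def)
      have "g - {#P#} \<in> Nset m (n - m)"
      proof -
        have "degG dp g = degG dp (g - {#P#}) + dp P" by (subst g) simp
        then have "degG dp (g - {#P#}) = n - m" using x by (simp add: Gs_def)
        moreover have "\<forall>Q\<in>#g - {#P#}. dp Q \<le> m" using all x by (auto dest: in_diffD)
        ultimately show ?thesis by (simp add: Nset_def)
      qed
      moreover have "P \<in> PSS S m" using x by (simp add: PSS_def Xg_def)
      ultimately show "x \<in> h ` (PSS S m \<times> Nset m (n - m))"
        using x g by (auto simp: h_def image_iff intro!: bexI[of _ "(P, g - {#P#})"])
    next
      fix x assume "x \<in> h ` (PSS S m \<times> Nset m (n - m))"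
      then obtain P r where x: "x = (r + {#P#}, P)" "P \<in> PSS S m" "r \<in> Nset m (n - m)"
        by (auto simp: h_def)
      have "degG dp (r + {#P#}) = n" using x m by (auto simp: Nset_def PSS_def)
      moreover have "\<forall>Q\<in>#r + {#P#}. dp Q \<le> dp P" using x by (auto simp: Nset_def PSS_def)
      ultimately show "x \<in> A m" using x dplus_iff[of P "r + {#P#}"]
        by (auto simp: A_def Gs_def Xg_def PSS_def)
    qed
    moreover have "inj_on h (PSS S m \<times> Nset m (n - m))"
      by (auto simp: inj_on_def h_def)
    ultimately have "card (A m) = card (PSS S m \<times> Nset m (n - m))"
      by (simp add: card_image)
    also have "\<dots> = card (PSS S m) * N m (n - m)"
      by (simp add: card_cartesian_product N_def)
    finally show "card (A m) = card (PSS S m) * N m (n - m)" .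
  qed
  finally show ?thesis .
qed

lemma card_offdiag:
  assumes "finite X"
  shows "card {(P, P'). P \<in> X \<and> P' \<in> X \<and> P \<noteq> P'} = card X * (card X - 1)"
proof -
  have eq: "{(P, P'). P \<in> X \<and> P' \<in> X \<and> P \<noteq> P'} = X \<times> X - (\<lambda>P. (P, P)) ` X" by auto
  have "card ((\<lambda>P. (P, P)) ` X) = card X" by (simp add: card_image inj_on_def)
  moreover have "(\<lambda>P. (P, P)) ` X \<subseteq> X \<times> X" by auto
  ultimately show ?thesis using assms
    by (simp add: eq card_Diff_subset finite_cartesian_product card_cartesian_product diff_mult_distrib2)
qed

lemma pairs_bound:
  "(\<Sum>g\<in>Gs n. QS dp UNIV g * (QS dp UNIV g - 1))
     \<le> (\<Sum>m\<in>{1..n}. card (PS m) ^ 2 * (if 2 * m \<le> n then N m (n - 2 * m) else 0))"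
proof -
  define D where "D g = {(P, P'). P \<in> Xg UNIV g \<and> P' \<in> Xg UNIV g \<and> P \<noteq> P'}" for g
  define B where "B m = {(g, PP). g \<in> Gs n \<and> PP \<in> D g \<and> dp (fst PP) = m}" for m
  have finD: "finite (D g)" for g
    by (rule finite_subset[of _ "Xg UNIV g \<times> Xg UNIV g"]) (auto simp: D_def)
  have "(\<Sum>g\<in>Gs n. QS dp UNIV g * (QS dp UNIV g - 1)) = (\<Sum>g\<in>Gs n. card (D g))"
    by (rule sum.cong[OF refl]) (simp add: D_def QS_eq card_offdiag)
  also have "\<dots> = card (SIGMA g:Gs n. D g)" by (simp add: card_SigmaI finD)
  also have "(SIGMA g:Gs n. D g) = (\<Union>m\<in>{1..n}. B m)"
    using Xg_deg by (fastforce simp: B_def D_def)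
  also have "card \<dots> \<le> (\<Sum>m\<in>{1..n}. card (B m))" by (rule card_UN_le) simp
  also have "\<dots> \<le> (\<Sum>m\<in>{1..n}. card (PS m) ^ 2 * (if 2 * m \<le> n then N m (n - 2 * m) else 0))"
  proof (rule sum_mono)
    fix m assume m: "m \<in> {1..n}"
    have key: "add_mset P {#P'#} \<subseteq># g \<and> dp P' = m"
      if "(g, (P, P')) \<in> B m" for g P P'
    proof -
      have P: "P \<in># g" "P' \<in># g" "P \<noteq> P'" "dp P = dplus dp g" "dp P' = dplus dp g" "dp P = m"
        using that by (auto simp: B_def D_def Xg_def)
      then have "add_mset P {#P'#} \<subseteq># g"
        by (auto simp: subseteq_mset_def Suc_le_eq)
      then show ?thesis using P by simp
    qed
    show "card (B m) \<le> card (PS m) ^ 2 * (if 2 * m \<le> n then N m (n - 2 * m) else 0)"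
    proof (cases "2 * m \<le> n")
      case False
      have "B m = {}"
      proof (rule ccontr)
        assume "B m \<noteq> {}"
        then obtain g P P' where x: "(g, (P, P')) \<in> B m" by auto
        from key[OF x] have "degG dp (add_mset P {#P'#}) \<le> degG dp g" by (intro degG_mono) auto
        moreover have "dp P = m" using x by (simp add: B_def)
        ultimately have "2 * m \<le> n" using key[OF x] x by (simp add: B_def Gs_def)
        with False show False by simp
      qed
      then show ?thesis by simp
    next
      case True
      define h where "h = (\<lambda>(g, (P::'p, P'::'p)). ((P, P'), g - add_mset P {#P'#}))"
      have "card (B m) \<le> card ((PS m \<times> PS m) \<times> Nset m (n - 2 * m))"
      proof (rule card_inj_on_le)
        show "inj_on h (B m)"
        proof (rule inj_onI)
          fix x y assume x: "x \<in> B m" and y: "y \<in> B m" and eq: "h x = h y"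
          obtain g P P' where xx: "x = (g, (P, P'))" by (metis prod.collapse)
          obtain g' Q Q' where yy: "y = (g', (Q, Q'))" by (metis prod.collapse)
          have PQ: "P = Q" "P' = Q'" "g - add_mset P {#P'#} = g' - add_mset Q {#Q'#}"
            using eq by (auto simp: xx yy h_def)
          have e1: "(g - add_mset P {#P'#}) + add_mset P {#P'#} = g"
            by (rule subset_mset.diff_add) (use key[of g P P'] x xx in auto)
          have e2: "(g' - add_mset Q {#Q'#}) + add_mset Q {#Q'#} = g'"
            by (rule subset_mset.diff_add) (use key[of g' Q Q'] y yy in auto)
          have "g = g'" using e1 e2 PQ by metis
          then show "x = y" using xx yy PQ by simp
        qed
        show "h ` B m \<subseteq> (PS m \<times> PS m) \<times> Nset m (n - 2 * m)"
        proof
          fix z assume "z \<in> h ` B m"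
          then obtain g P P' where x: "(g, (P, P')) \<in> B m" and z: "z = h (g, (P, P'))" by auto
          have sub: "add_mset P {#P'#} \<subseteq># g" and dP': "dp P' = m" using key[OF x] by auto
          have P0: "P \<in># g" "dp P = dplus dp g" "dp P = m" "g \<in> Gs n"
            using x by (auto simp: B_def D_def Xg_def)
          have P: "dp P = m" "g \<in> Gs n" "\<forall>Q\<in>#g. dp Q \<le> dp P" "P \<in># g"
            using P0 dplus_iff[OF P0(1)] by auto
          have "degG dp (g - add_mset P {#P'#}) = n - 2 * m"
            using degG_diff[OF sub, of dp] P dP' by (simp add: Gs_def)
          moreover have "\<forall>Q\<in># g - add_mset P {#P'#}. dp Q \<le> m"
            using P by (auto dest: in_diffD)
          ultimately show "z \<in> (PS m \<times> PS m) \<times> Nset m (n - 2 * m)"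
            using z P dP' by (simp add: h_def PS_def Nset_def)
        qed
      qed (simp add: finite_cartesian_product)
      also have "\<dots> = card (PS m) ^ 2 * N m (n - 2 * m)"
        by (simp add: card_cartesian_product N_def power2_eq_square)
      finally show ?thesis using True by simp
    qed
  qed
  finally show ?thesis .
qed

lemma QS_pos:
  assumes "g \<in> Gs n" "n \<ge> 1"
  shows "QS dp UNIV g \<ge> 1"
proof -
  have ne: "g \<noteq> {#}" using assms by (auto simp: Gs_def)
  then have "Max (dp ` set_mset g) \<in> dp ` set_mset g" by (intro Max_in) auto
  then obtain P where P: "P \<in># g" "dp P = Max (dp ` set_mset g)" by auto
  then have "P \<in> Xg UNIV g" using ne by (simp add: Xg_def dplus_def)
  then show ?thesis unfolding QS_eq using card_0_eq[OF finite_Xg] by fastforce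
qed

end

lemma ev_to_all:
  fixes a b :: "nat \<Rightarrow> real"
  assumes "eventually (\<lambda>n. a n \<le> C * b n) sequentially" "\<And>n. b n > 0"
  shows "\<exists>B>0. \<forall>n. a n \<le> B * b n"
proof -
  obtain N where N: "\<And>n. n \<ge> N \<Longrightarrow> a n \<le> C * b n"
    using assms(1) by (auto simp: eventually_sequentially)
  define B where "B = max (max C 1) (Max ((\<lambda>n. a n / b n) ` {..<N}))"
  have "B > 0" by (simp add: B_def)
  moreover have "a n \<le> B * b n" for n
  proof (cases "n < N")
    case True
    then have "a n / b n \<le> Max ((\<lambda>n. a n / b n) ` {..<N})" by (intro Max_ge) auto
    then have "a n / b n \<le> B" by (simp add: B_def)
    then show ?thesis using assms(2)[of n] by (simp add: divide_le_eq)
  next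
    case False
    then have "a n \<le> C * b n" using N by simp
    also have "\<dots> \<le> B * b n" using assms(2)[of n] by (intro mult_right_mono) (auto simp: B_def)
    finally show ?thesis .
  qed
  ultimately show ?thesis by blast
qed

lemma conv_radius_mono_le:
  fixes a b :: "nat \<Rightarrow> complex"
  assumes "\<And>n. norm (a n) \<le> norm (b n)"
  shows "conv_radius a \<ge> conv_radius b"
proof (rule conv_radius_geI_ex')
  fix r :: real assume r: "0 < r" "ereal r < conv_radius b"
  have "summable (\<lambda>n. norm (b n * of_real r ^ n))"
    by (rule abs_summable_in_conv_radius) (use r in simp)
  then have "summable (\<lambda>n. norm (a n * of_real r ^ n))"
    by (rule summable_comparison_test[rotated])
       (use assms r in \<open>auto simp: norm_mult norm_power intro!: mult_right_mono\<close>)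
  then show "summable (\<lambda>n. a n * of_real r ^ n)" by (rule summable_norm_cancel)
qed

lemma conv_radius_geom:
  fixes a :: "nat \<Rightarrow> complex"
  assumes "\<And>n. norm (a n) \<le> B * r ^ n" "r > 0"
  shows "conv_radius a \<ge> ereal (1 / r)"
proof (rule conv_radius_geI_ex')
  fix s :: real assume s: "0 < s" "ereal s < ereal (1 / r)"
  then have rs: "r * s < 1" using assms(2) by (simp add: field_simps)
  have "summable (\<lambda>n. B * (r * s) ^ n)"
    using rs s assms(2) by (intro summable_mult summable_geometric) simp
  then have "summable (\<lambda>n. norm (a n * of_real s ^ n))"
    by (rule summable_comparison_test[rotated])
       (use assms s in \<open>auto simp: norm_mult norm_power power_mult_distrib mult.assoc intro!: mult_right_mono\<close>)
  then show "summable (\<lambda>n. a n * of_real s ^ n)" by (rule summable_norm_cancel)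
qed

locale aas_an = aas dp for dp :: "'p \<Rightarrow> nat" +
  fixes c q \<eta> :: real
  assumes q_gt: "q > 1" and eta: "0 \<le> \<eta>" "\<eta> < 1"
    and Asharp: "(\<lambda>n. real (Gcount dp n) - c * q ^ n) \<in> O(\<lambda>n. q powr (\<eta> * real n))"
begin

definition rho where "rho = q powr \<eta>"

lemma rho_ge1: "rho \<ge> 1" using q_gt eta by (simp add: rho_def ge_one_powr_ge_zero)
lemma rho_lt: "rho < q" using q_gt eta powr_less_mono[of \<eta> 1 q] by (simp add: rho_def)
lemma rho_pow: "q powr (\<eta> * real n) = rho ^ n"
  using q_gt by (simp add: rho_def powr_powr[symmetric] powr_realpow)

lemma Asharp_ev: obtains K where "K > 0" "\<And>n. n \<ge> NN \<Longrightarrow> True"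
    "eventually (\<lambda>n. \<bar>real (G n) - c * q ^ n\<bar> \<le> K * rho ^ n) sequentially"
proof -
  from Asharp obtain K where K: "K > 0"
    "eventually (\<lambda>n. norm (real (Gcount dp n) - c * q ^ n) \<le> K * norm (q powr (\<eta> * real n))) sequentially"
    by (elim landau_o.bigE)
  from K(2) have "eventually (\<lambda>n. \<bar>real (G n) - c * q ^ n\<bar> \<le> K * rho ^ n) sequentially"
    by eventually_elim (use rho_ge1 in \<open>simp add: G_eq rho_pow power_abs\<close>)
  with K(1) that show ?thesis by blast
qed

lemma G_bound: obtains B where "B > 0" "\<And>n. real (G n) \<le> B * q ^ n"
proof -
  obtain K where K: "K > 0" "eventually (\<lambda>n. \<bar>real (G n) - c * q ^ n\<bar> \<le> K * rho ^ n) sequentially"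
    using Asharp_ev by blast
  have "eventually (\<lambda>n. real (G n) \<le> (\<bar>c\<bar> + K) * q ^ n) sequentially"
    using K(2)
  proof eventually_elim
    case (elim n)
    have "rho ^ n \<le> q ^ n" using rho_lt rho_ge1 by (intro power_mono) auto
    then have "K * rho ^ n \<le> K * q ^ n" using K(1) by simp
    moreover have "c * q ^ n \<le> \<bar>c\<bar> * q ^ n" using q_gt by (intro mult_right_mono) auto
    ultimately show ?case using elim by (simp add: algebra_simps abs_le_iff)
  qed
  from ev_to_all[OF this] q_gt obtain B where "B > 0" "\<forall>n. real (G n) \<le> B * q ^ n" by auto
  with that show ?thesis by blast
qed

definition e :: "nat \<Rightarrow> real" where
  "e n = real (G n) - (if n = 0 then 0 else q * real (G (n - 1)))"

lemma e_bound: obtains B where "B > 0" "\<And>n. \<bar>e n\<bar> \<le> B * rho ^ n"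
proof -
  obtain K where K: "K > 0" "eventually (\<lambda>n. \<bar>real (G n) - c * q ^ n\<bar> \<le> K * rho ^ n) sequentially"
    using Asharp_ev by blast
  then obtain N where N: "\<And>n. n \<ge> N \<Longrightarrow> \<bar>real (G n) - c * q ^ n\<bar> \<le> K * rho ^ n"
    by (auto simp: eventually_sequentially)
  have "eventually (\<lambda>n. \<bar>e n\<bar> \<le> (K * (1 + q)) * rho ^ n) sequentially"
    unfolding eventually_sequentially
  proof (intro exI[of _ "N + 1"] allI impI)
    fix n assume n: "n \<ge> N + 1"
    then obtain m where m: "n = Suc m" "m \<ge> N" by (cases n) auto
    have "e n = (real (G n) - c * q ^ n) - q * (real (G m) - c * q ^ m)"
      using m by (simp add: e_def algebra_simps)
    also have "\<bar>\<dots>\<bar> \<le> K * rho ^ n + q * (K * rho ^ m)"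
    proof -
      have "\<bar>q * (real (G m) - c * q ^ m)\<bar> \<le> q * (K * rho ^ m)"
        using N[of m] m q_gt by (simp add: abs_mult)
      then show ?thesis using N[of n] m by linarith
    qed
    also have "\<dots> \<le> K * rho ^ n + q * (K * rho ^ n)"
      using m rho_ge1 K q_gt by (auto intro!: mult_left_mono power_increasing)
    finally show "\<bar>e n\<bar> \<le> K * (1 + q) * rho ^ n" by (simp add: algebra_simps)
  qed
  from ev_to_all[OF this] rho_ge1 obtain B where "B > 0" "\<forall>n. \<bar>e n\<bar> \<le> B * rho ^ n" by auto
  with that show ?thesis by blast
qed

lemma recurrence2: "(\<Sum>i\<in>{0..n}. G i * Lam (n - i)) = n * G n"
proof -
  have "(\<Sum>i\<in>{0..n}. G i * Lam (n - i)) = (\<Sum>k\<in>{0..n}. Lam k * G (n - k))"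
    by (rule sum.reindex_bij_witness[of _ "\<lambda>k. n - k" "\<lambda>i. n - i"]) auto
  also have "\<dots> = Lam 0 * G n + (\<Sum>k\<in>{1..n}. Lam k * G (n - k))"
    by (subst sum.atLeast_Suc_atMost) auto
  also have "\<dots> = n * G n" by (simp add: Lam0 recurrence)
  finally show ?thesis .
qed

definition Gf :: "complex fps" where "Gf = Abs_fps (\<lambda>n. of_nat (G n))"
definition Lf :: "complex fps" where "Lf = Abs_fps (\<lambda>n. of_nat (Lam n))"
definition Qf :: "complex fps" where "Qf = Abs_fps (\<lambda>n. if n = 0 then 0 else of_real q ^ n)"
definition Cq :: "complex fps" where "Cq = fps_const (of_real q)"
definition Ef :: "complex fps" where "Ef = Gf - Cq * (fps_X * Gf)"
definition Kf :: "complex fps" where "Kf = Lf - Qf"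

lemma I1: "fps_X * fps_deriv Gf = Gf * Lf"
proof (rule fps_ext)
  fix n
  have "(Gf * Lf) $ n = (\<Sum>i=0..n. of_nat (G i) * of_nat (Lam (n - i)))"
    by (simp add: fps_mult_nth Gf_def Lf_def)
  also have "\<dots> = of_nat (\<Sum>i=0..n. G i * Lam (n - i))" by simp
  also have "\<dots> = of_nat (n * G n)" by (simp only: recurrence2)
  finally show "(fps_X * fps_deriv Gf) $ n = (Gf * Lf) $ n"
    by (cases n) (simp_all add: fps_X_mult_nth fps_deriv_nth Gf_def algebra_simps)
qed

lemma I2: "(1 - Cq * fps_X) * Qf = Cq * fps_X"
proof (rule fps_ext)
  fix n
  have "(1 - Cq * fps_X) * Qf = Qf - Cq * (fps_X * Qf)" by (simp add: algebra_simps)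
  then have "((1 - Cq * fps_X) * Qf) $ n = Qf $ n - of_real q * (fps_X * Qf) $ n"
    by (simp only: fps_sub_nth Cq_def fps_mult_left_const_nth)
  moreover have "(Cq * fps_X) $ n = of_real q * fps_X $ n"
    by (simp only: Cq_def fps_mult_left_const_nth)
  ultimately show "((1 - Cq * fps_X) * Qf) $ n = (Cq * fps_X) $ n"
    by (cases n) (auto simp: fps_X_mult_nth Qf_def fps_X_nth)
qed

lemma I3: "fps_X * fps_deriv Ef = Ef * Kf"
proof -
  have Ef': "Ef = (1 - Cq * fps_X) * Gf" by (simp add: Ef_def algebra_simps)
  have d: "fps_deriv Ef = fps_deriv Gf - Cq * (Gf + fps_X * fps_deriv Gf)"
    by (simp add: Ef_def Cq_def fps_deriv_mult)
  have "fps_X * fps_deriv Ef = (1 - Cq * fps_X) * (fps_X * fps_deriv Gf) - Cq * fps_X * Gf"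
    by (simp add: d algebra_simps)
  also have "\<dots> = (1 - Cq * fps_X) * (Gf * Lf) - Cq * fps_X * Gf" by (simp add: I1)
  also have "\<dots> = (1 - Cq * fps_X) * Gf * Lf - Gf * ((1 - Cq * fps_X) * Qf)"
  proof -
    have "Gf * ((1 - Cq * fps_X) * Qf) = Gf * (Cq * fps_X)" by (simp only: I2)
    then show ?thesis by (simp add: algebra_simps)
  qed
  also have "\<dots> = Ef * Kf" by (simp add: Ef' Kf_def algebra_simps)
  finally show ?thesis .
qed

lemma Ef_nth: "Ef $ n = of_real (e n)"
  by (cases n) (simp_all add: Ef_def Cq_def e_def Gf_def fps_X_mult_nth fps_mult_left_const_nth)

lemma Kf_nth: "Kf $ n = of_nat (Lam n) - (if n = 0 then 0 else of_real q ^ n)"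
  by (simp add: Kf_def Lf_def Qf_def)

lemma Ef0: "Ef $ 0 = 1" by (simp add: Ef_nth e_def G0)

end

lemma res_logderiv:
  fixes F :: "complex \<Rightarrow> complex"
  assumes holF: "F holomorphic_on ball \<zeta> e" and Fz: "F \<zeta> = 0" and e: "e > 0"
    and z0: "0 \<notin> ball \<zeta> e"
    and nz: "\<And>w. w \<in> ball \<zeta> e \<Longrightarrow> w \<noteq> \<zeta> \<Longrightarrow> F w \<noteq> 0"
  shows "residue (\<lambda>w. w * deriv F w / F w / w ^ Suc n) \<zeta> = of_int (zorder F \<zeta>) / \<zeta> ^ n"
proof -
  define \<gamma> where "\<gamma> = circlepath \<zeta> (e / 2)"
  define h where "h = (\<lambda>w::complex. 1 / w ^ n)"
  define ff where "ff = (\<lambda>x. deriv F x * h x / F x)"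
  define GG where "GG = (\<lambda>w. w * deriv F w / F w / w ^ Suc n)"
  have pz: "{w\<in>ball \<zeta> e. F w = 0 \<or> w \<in> {}} = {\<zeta>}"
    using nz Fz e by auto
  have "contour_integral \<gamma> ff = 2 * pi * \<i> *
          (\<Sum>p\<in>{w\<in>ball \<zeta> e. F w = 0 \<or> w \<in> {}}. winding_number \<gamma> p * h p * of_int (zorder F p))"
    unfolding ff_def
  proof (rule argument_principle)
    show "open (ball \<zeta> e)" "connected (ball \<zeta> e)" by auto
    show "F holomorphic_on ball \<zeta> e - {}" using holF by simp
    show "h holomorphic_on ball \<zeta> e" unfolding h_def using z0 by (auto intro!: holomorphic_intros)
    show "valid_path \<gamma>" "pathfinish \<gamma> = pathstart \<gamma>" by (auto simp: \<gamma>_def)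
    show "path_image \<gamma> \<subseteq> ball \<zeta> e - {w\<in>ball \<zeta> e. F w = 0 \<or> w \<in> {}}"
    proof
      fix x assume "x \<in> path_image \<gamma>"
      then have "dist \<zeta> x = e / 2" using e by (simp add: \<gamma>_def)
      then have "x \<in> ball \<zeta> e" "x \<noteq> \<zeta>" using e by auto
      then show "x \<in> ball \<zeta> e - {w\<in>ball \<zeta> e. F w = 0 \<or> w \<in> {}}" using nz by auto
    qed
    show "\<forall>z. z \<notin> ball \<zeta> e \<longrightarrow> winding_number \<gamma> z = 0"
    proof (intro allI impI)
      fix z assume "z \<notin> ball \<zeta> e"
      then have "z \<notin> cball \<zeta> (e/2)" using e by auto
      moreover have "path_image \<gamma> \<subseteq> cball \<zeta> (e/2)" using e by (auto simp: \<gamma>_def)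
      ultimately show "winding_number \<gamma> z = 0"
        using winding_number_zero_outside[of \<gamma> "cball \<zeta> (e/2)" z] by (auto simp: \<gamma>_def)
    qed
    show "finite {w\<in>ball \<zeta> e. F w = 0 \<or> w \<in> {}}" by (simp only: pz) simp
    show "\<forall>p\<in>ball \<zeta> e \<inter> {}. is_pole F p" by simp
  qed
  also have "\<dots> = 2 * pi * \<i> * (h \<zeta> * of_int (zorder F \<zeta>))"
    using e unfolding pz by (simp add: \<gamma>_def winding_number_circlepath)
  finally have ci: "contour_integral \<gamma> ff = 2 * pi * \<i> * (h \<zeta> * of_int (zorder F \<zeta>))" .
  have "(GG has_contour_integral 2 * pi * \<i> * residue GG \<zeta>) \<gamma>"
    unfolding \<gamma>_def
  proof (rule base_residue[of "ball \<zeta> e"])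
    have "deriv F holomorphic_on ball \<zeta> e" by (intro holomorphic_deriv holF) auto
    then show "GG holomorphic_on ball \<zeta> e - {\<zeta>}"
      unfolding GG_def using holF nz z0
      by (intro holomorphic_intros) (auto intro: holomorphic_on_subset)
  qed (use e in auto)
  then have "(ff has_contour_integral 2 * pi * \<i> * residue GG \<zeta>) \<gamma>"
  proof (rule has_contour_integral_eq)
    fix x assume "x \<in> path_image \<gamma>"
    then have "x \<in> ball \<zeta> e" using e by (auto simp: \<gamma>_def dist_norm)
    then have "x \<noteq> 0" using z0 by auto
    then show "GG x = ff x" by (simp add: GG_def ff_def h_def field_simps)
  qed
  then have "contour_integral \<gamma> ff = 2 * pi * \<i> * residue GG \<zeta>" by (rule contour_integral_unique)
  with ci have "residue GG \<zeta> = h \<zeta> * of_int (zorder F \<zeta>)" by simp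
  then show ?thesis by (simp add: GG_def h_def)
qed


lemma gap_lemma:
  fixes M :: "real set"
  assumes "finite M" "a < b"
  shows "\<exists>r1 r2. a < r1 \<and> r1 < r2 \<and> r2 < b \<and> (\<forall>m\<in>M. m < r1 \<or> m > r2)"
proof -
  define m0 where "m0 = Min (insert b {m\<in>M. a < m})"
  have fin: "finite (insert b {m\<in>M. a < m})" using assms by simp
  have "a < m0" unfolding m0_def using fin assms by (subst Min_gr_iff) auto
  have "m0 \<le> b" unfolding m0_def using fin by (intro Min_le) auto
  define r1 where "r1 = a + (m0 - a) / 3"
  define r2 where "r2 = a + 2 * (m0 - a) / 3"
  have "\<forall>m\<in>M. m < r1 \<or> m > r2"
  proof
    fix m assume m: "m \<in> M"
    show "m < r1 \<or> m > r2"
    proof (cases "a < m")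
      case True
      then have "m0 \<le> m" unfolding m0_def using fin m by (intro Min_le) auto
      with \<open>a < m0\<close> have "m > r2" unfolding r2_def by (simp add: field_simps)
      then show ?thesis by simp
    next
      case False
      with \<open>a < m0\<close> have "m < r1" unfolding r1_def by (simp add: field_simps)
      then show ?thesis by simp
    qed
  qed
  moreover have "a < r1" "r1 < r2" "r2 < b" using \<open>a < m0\<close> \<open>m0 \<le> b\<close> by (auto simp: r1_def r2_def field_simps)
  ultimately show ?thesis by blast
qed

context aas_an begin

lemma rad_Gf: "fps_conv_radius Gf \<ge> ereal (1 / q)"
proof -
  obtain B where B: "B > 0" "\<And>n. real (G n) \<le> B * q ^ n" using G_bound by blast
  show ?thesis unfolding fps_conv_radius_def
    by (rule conv_radius_geom[of _ B]) (use B q_gt in \<open>auto simp: Gf_def\<close>)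
qed

lemma rad_Ef: "fps_conv_radius Ef \<ge> ereal (1 / rho)"
proof -
  obtain B where B: "B > 0" "\<And>n. \<bar>e n\<bar> \<le> B * rho ^ n" using e_bound by blast
  show ?thesis unfolding fps_conv_radius_def
    by (rule conv_radius_geom[of _ B]) (use B rho_ge1 in \<open>auto simp: Ef_nth\<close>)
qed

lemma rad_Lf: "fps_conv_radius Lf \<ge> ereal (1 / q)"
proof -
  have "fps_conv_radius (fps_X * fps_deriv Gf) \<ge> min (fps_conv_radius fps_X) (fps_conv_radius (fps_deriv Gf))"
    using fps_conv_radius_mult[of "fps_X::complex fps" "fps_deriv Gf"] by simp
  moreover have "fps_conv_radius (fps_deriv Gf) \<ge> fps_conv_radius Gf" by (rule fps_conv_radius_deriv)
  ultimately have r: "fps_conv_radius (fps_X * fps_deriv Gf) \<ge> ereal (1 / q)"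
    using rad_Gf by (simp add: min_def split: if_splits)
  have "conv_radius (fps_nth Lf) \<ge> conv_radius (fps_nth (fps_X * fps_deriv Gf))"
  proof (rule conv_radius_mono_le)
    fix n
    show "norm (Lf $ n) \<le> norm ((fps_X * fps_deriv Gf) $ n)"
    proof (cases n)
      case 0 then show ?thesis by (simp add: Lf_def Lam0)
    next
      case (Suc m)
      have "real (Lam n) \<le> real (n * G n)" using Lam_le[of n] by linarith
      moreover have eq: "(fps_X * fps_deriv Gf) $ n = of_nat (n * G n)"
        using Suc by (simp add: fps_X_mult_nth fps_deriv_nth Gf_def algebra_simps)
      moreover have "norm ((fps_X * fps_deriv Gf) $ n) = real (n * G n)" by (simp only: eq norm_of_nat)
      moreover have "norm (Lf $ n) = real (Lam n)" by (simp add: Lf_def)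
      ultimately show ?thesis by linarith
    qed
  qed
  with r show ?thesis by (simp add: fps_conv_radius_def)
qed

lemma rad_Qf: "fps_conv_radius Qf \<ge> ereal (1 / q)"
  unfolding fps_conv_radius_def
  by (rule conv_radius_geom[of _ 1]) (use q_gt in \<open>auto simp: Qf_def norm_power\<close>)

lemma rad_Kf: "fps_conv_radius Kf \<ge> ereal (1 / q)"
  using fps_conv_radius_diff[of Lf Qf] rad_Lf rad_Qf unfolding Kf_def
  by (simp add: min_def split: if_splits)

lemma q_rho: "1 / q < 1 / rho" using rho_lt rho_ge1 by (simp add: frac_less2)

lemma ident:
  assumes "norm z < 1 / q"
  shows "z * deriv (eval_fps Ef) z = eval_fps Ef z * eval_fps Kf z"
proof -
  have "ereal (norm z) < ereal (1 / rho)" using assms q_rho by simp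
  then have zE: "ereal (norm z) < fps_conv_radius Ef" using rad_Ef by (rule less_le_trans)
  have zD: "ereal (norm z) < fps_conv_radius (fps_deriv Ef)"
    using zE fps_conv_radius_deriv[of Ef] by (rule less_le_trans)
  have "ereal (norm z) < ereal (1 / q)" using assms by simp
  then have zK: "ereal (norm z) < fps_conv_radius Kf" using rad_Kf by (rule less_le_trans)
  have "eval_fps (fps_X * fps_deriv Ef) z = z * deriv (eval_fps Ef) z"
    using zD zE by (simp add: eval_fps_mult eval_fps_deriv)
  moreover have "eval_fps (Ef * Kf) z = eval_fps Ef z * eval_fps Kf z"
    using zE zK by (simp add: eval_fps_mult)
  ultimately show ?thesis by (simp add: I3)
qed

end

context aas_an begin

lemma Lam_bound: obtains D where "D > 0" "\<And>n. real (Lam n) \<le> D * q ^ n"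
proof -
  define F where "F = eval_fps Ef"
  define R where "R = 1 / rho"
  have qR: "1 / q < R" using q_rho by (simp add: R_def)
  have q0: "q > 0" using q_gt by simp
  have R0: "R > 0" using rho_ge1 by (simp add: R_def)
  have ballR: "ball (0::complex) R \<subseteq> eball 0 (fps_conv_radius Ef)"
  proof
    fix z :: complex assume "z \<in> ball 0 R"
    then have "ereal (norm z) < ereal R" by simp
    also have "\<dots> \<le> fps_conv_radius Ef" using rad_Ef by (simp add: R_def)
    finally show "z \<in> eball 0 (fps_conv_radius Ef)" by simp
  qed
  have holF: "F holomorphic_on ball 0 R" unfolding F_def by (rule holomorphic_on_eval_fps[OF ballR])
  have holdF: "deriv F holomorphic_on ball 0 R" by (intro holomorphic_deriv holF) auto
  have F0: "F 0 = 1" by (simp add: F_def eval_fps_at_0 Ef0)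
  define r3 where "r3 = (1 / q + R) / 2"
  have r3: "1 / q < r3" "r3 < R" using qR by (auto simp: r3_def)
  have cb: "cball 0 r3 \<subseteq> ball 0 R" using r3 by auto
  have finZ: "finite {z \<in> cball 0 r3. F z = 0}"
  proof (cases "F constant_on ball 0 R")
    case True
    then obtain k where k: "\<And>x. x \<in> ball 0 R \<Longrightarrow> F x = k" by (auto simp: constant_on_def)
    have "0 \<in> ball 0 R" using qR q0 by (simp add: less_trans[of 0 "1/q" R])
    then have "k = 1" using k F0 by force
    have "F z \<noteq> 0" if "z \<in> cball 0 r3" for z
      using k[of z] cb that \<open>k = 1\<close> by (metis subsetD one_neq_zero)
    then have "{z \<in> cball 0 r3. F z = 0} = {}" by auto
    then show ?thesis by (metis finite.emptyI)
  next
    case False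
    show ?thesis
      by (rule holomorphic_compact_finite_zeros[OF holF]) (use False cb in auto)
  qed
  obtain r1 r2 where r12: "1 / q < r1" "r1 < r2" "r2 < r3"
    and gap: "\<forall>m\<in>norm ` {z \<in> cball 0 r3. F z = 0}. m < r1 \<or> m > r2"
    using gap_lemma[of "norm ` {z \<in> cball 0 r3. F z = 0}" "1 / q" r3] finZ r3 by auto
  have r1pos: "r1 > 0" using r12 q0 by (meson less_trans zero_less_divide_1_iff)
  define A where "A = ball (0::complex) r2"
  define S where "S = {z\<in>A. F z = 0}"
  have AR: "A \<subseteq> ball 0 R" using r12 r3 by (auto simp: A_def)
  have SZ: "S \<subseteq> {z \<in> cball 0 r3. F z = 0}" using r12 by (auto simp: S_def A_def)
  have finS: "finite S" using finite_subset[OF SZ finZ] .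
  have S1: "S \<subseteq> ball 0 r1"
  proof
    fix z assume z: "z \<in> S"
    then have "norm z < r2" by (simp add: S_def A_def)
    moreover have "norm z < r1 \<or> norm z > r2" using gap SZ z by blast
    ultimately show "z \<in> ball 0 r1" by auto
  qed
  have S0: "0 \<notin> S" using F0 by (simp add: S_def)
  define H where "H = (\<lambda>z. z * deriv F z / F z)"
  have holH: "H holomorphic_on A - S"
  proof -
    have "F holomorphic_on A - S" "deriv F holomorphic_on A - S"
      using holF holdF AR by (auto intro: holomorphic_on_subset)
    moreover have "\<And>z. z \<in> A - S \<Longrightarrow> F z \<noteq> 0" by (auto simp: S_def)
    moreover have "open (A - S)" using finS by (intro open_Diff finite_imp_closed) (auto simp: A_def)
    ultimately show ?thesis unfolding H_def by (intro holomorphic_intros) auto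
  qed
  have sphS: "sphere 0 r1 \<subseteq> A - S" using S1 r12 by (auto simp: A_def)
  have "compact (H ` sphere 0 r1)"
    by (intro compact_continuous_image holomorphic_on_imp_continuous_on
              holomorphic_on_subset[OF holH sphS]) auto
  then have "bounded (H ` sphere 0 r1)" by (rule compact_imp_bounded)
  then obtain C where C: "\<And>z. z \<in> sphere 0 r1 \<Longrightarrow> norm (H z) \<le> C"
    unfolding bounded_iff by (metis image_eqI)
  have C0: "C \<ge> 0"
  proof -
    have "complex_of_real r1 \<in> sphere 0 r1" using r1pos by simp
    from C[OF this] show ?thesis by (meson norm_ge_zero order_trans)
  qed
  have radK: "fps_conv_radius Kf > 0"
    using rad_Kf q0 by (meson ereal_less(2) less_le_trans zero_less_divide_1_iff)
  have expK: "H has_fps_expansion Kf"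
    unfolding has_fps_expansion_def
  proof (intro conjI radK)
    have "isCont F 0" using holF R0
      by (intro holomorphic_on_imp_continuous_on[THEN continuous_on_interior]) (auto intro: less_trans)
    then obtain \<epsilon> where \<epsilon>: "\<epsilon> > 0" "\<And>y. dist 0 y < \<epsilon> \<Longrightarrow> F y \<noteq> 0"
      using continuous_at_avoid[of 0 F 0] F0 by auto
    show "eventually (\<lambda>z. eval_fps Kf z = H z) (nhds 0)"
      unfolding eventually_nhds_metric
    proof (intro exI[of _ "min \<epsilon> (1/q)"] conjI allI impI)
      show "min \<epsilon> (1 / q) > 0" using \<epsilon> q0 by simp
      fix y :: complex assume y: "dist y 0 < min \<epsilon> (1 / q)"
      then have "F y \<noteq> 0" "norm y < 1 / q" using \<epsilon> by (auto simp: dist_commute)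
      then show "eval_fps Kf y = H y" using ident[of y] by (simp add: H_def F_def field_simps)
    qed
  qed
  have res: "norm (residue (\<lambda>w. H w / w ^ Suc n) \<zeta>) \<le> real_of_int \<bar>zorder F \<zeta>\<bar> * q ^ n"
    if z: "\<zeta> \<in> S" for \<zeta> n
  proof (cases "norm \<zeta> < 1 / q")
    case True
    have ev1: "eventually (\<lambda>w. w \<notin> S) (at \<zeta>)"
      using islimpt_finite[OF finS] islimpt_iff_eventually by blast
    have ev2: "eventually (\<lambda>w. w \<in> ball 0 (1/q) \<inter> A) (at \<zeta>)"
      by (rule eventually_at_in_open') (use True z in \<open>auto simp: S_def A_def\<close>)
    have "eventually (\<lambda>w. H w / w ^ Suc n = eval_fps Kf w / w ^ Suc n) (at \<zeta>)"
      using ev1 ev2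
    proof eventually_elim
      case (elim w)
      then have "F w \<noteq> 0" "norm w < 1 / q" by (auto simp: S_def)
      then show ?case using ident[of w] by (simp add: H_def F_def field_simps)
    qed
    then have "residue (\<lambda>w. H w / w ^ Suc n) \<zeta> = residue (\<lambda>w. eval_fps Kf w / w ^ Suc n) \<zeta>"
      by (rule residue_cong) simp
    also have "\<dots> = 0"
    proof (rule residue_holo[of "ball 0 (1/q) - {0}"])
      show "open (ball 0 (1 / q) - {0::complex})" by auto
      show "\<zeta> \<in> ball 0 (1 / q) - {0}" using True z S0 by auto
      have "ball (0::complex) (1/q) \<subseteq> eball 0 (fps_conv_radius Kf)"
      proof
        fix w :: complex assume "w \<in> ball 0 (1/q)"
        then have "ereal (norm w) < ereal (1/q)" by simp
        also have "\<dots> \<le> fps_conv_radius Kf" by (rule rad_Kf)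
        finally show "w \<in> eball 0 (fps_conv_radius Kf)" by simp
      qed
      then have "eval_fps Kf holomorphic_on ball 0 (1/q) - {0}"
        by (intro holomorphic_on_eval_fps) auto
      then show "(\<lambda>w. eval_fps Kf w / w ^ Suc n) holomorphic_on ball 0 (1 / q) - {0}"
        by (rule holomorphic_on_divide) (auto intro!: holomorphic_intros)
    qed
    finally show ?thesis using q0 by simp
  next
    case False
    have zin: "\<zeta> \<in> A - {0}" using z S0 by (auto simp: S_def)
    obtain e where e: "e > 0" "\<forall>w\<in>cball \<zeta> e. w \<in> A - {0} \<and> (w \<noteq> \<zeta> \<longrightarrow> w \<notin> S)"
      using finite_cball_avoid[OF _ finS zin] by (auto simp: A_def)
    have "residue (\<lambda>w. w * deriv F w / F w / w ^ Suc n) \<zeta> = of_int (zorder F \<zeta>) / \<zeta> ^ n"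
    proof (rule res_logderiv)
      show "F holomorphic_on ball \<zeta> e"
        by (rule holomorphic_on_subset[OF holF]) (use e AR in auto)
      show "F \<zeta> = 0" using z by (simp add: S_def)
      show "e > 0" by (rule e)
      show "0 \<notin> ball \<zeta> e" using e by auto
      fix w assume "w \<in> ball \<zeta> e" "w \<noteq> \<zeta>"
      then show "F w \<noteq> 0" using e by (auto simp: S_def)
    qed
    then have "residue (\<lambda>w. H w / w ^ Suc n) \<zeta> = of_int (zorder F \<zeta>) / \<zeta> ^ n"
      by (simp add: H_def)
    moreover have "norm (of_int (zorder F \<zeta>) / \<zeta> ^ n :: complex) \<le> real_of_int \<bar>zorder F \<zeta>\<bar> * q ^ n"
    proof -
      have nz: "norm \<zeta> \<ge> 1 / q" using False by simp
      then have pos: "norm \<zeta> > 0" using q0 by (meson less_le_trans zero_less_divide_1_iff)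
      have "1 / norm \<zeta> \<le> q" using nz pos q0 by (simp add: field_simps)
      then have "(1 / norm \<zeta>) ^ n \<le> q ^ n" using pos by (intro power_mono) auto
      then have "real_of_int \<bar>zorder F \<zeta>\<bar> * (1 / norm \<zeta>) ^ n \<le> real_of_int \<bar>zorder F \<zeta>\<bar> * q ^ n"
        by (intro mult_left_mono) auto
      then show ?thesis by (simp add: norm_divide norm_power power_divide)
    qed
    ultimately show ?thesis by simp
  qed
  define W where "W = (\<Sum>\<zeta>\<in>S. real_of_int \<bar>zorder F \<zeta>\<bar>)"
  have W0: "W \<ge> 0" unfolding W_def by (intro sum_nonneg) auto
  have Kbound: "norm (Kf $ n) \<le> (C + W) * q ^ n" for n
  proof -
    have "norm ((deriv ^^ n) H 0 / fact n + (\<Sum>\<zeta>\<in>S. residue (\<lambda>w. H w / w ^ Suc n) \<zeta>)) \<le> C / r1 ^ n"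
      by (rule fps_coeff_residues_bound[where A = A and k = "{}"])
         (use holH S1 finS S0 C C0 r1pos r12 in \<open>auto simp: A_def\<close>)
    moreover have "(deriv ^^ n) H 0 / fact n = Kf $ n" using fps_nth_fps_expansion[OF expK] by simp
    ultimately have b1: "norm (Kf $ n + (\<Sum>\<zeta>\<in>S. residue (\<lambda>w. H w / w ^ Suc n) \<zeta>)) \<le> C / r1 ^ n" by simp
    have b2: "norm (\<Sum>\<zeta>\<in>S. residue (\<lambda>w. H w / w ^ Suc n) \<zeta>) \<le> W * q ^ n"
    proof -
      have "norm (\<Sum>\<zeta>\<in>S. residue (\<lambda>w. H w / w ^ Suc n) \<zeta>) \<le> (\<Sum>\<zeta>\<in>S. norm (residue (\<lambda>w. H w / w ^ Suc n) \<zeta>))"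
        by (rule norm_sum)
      also have "\<dots> \<le> (\<Sum>\<zeta>\<in>S. real_of_int \<bar>zorder F \<zeta>\<bar> * q ^ n)"
        by (intro sum_mono res)
      also have "\<dots> = W * q ^ n" by (simp add: W_def sum_distrib_right)
      finally show ?thesis .
    qed
    have b3: "C / r1 ^ n \<le> C * q ^ n"
    proof -
      have "1 / r1 \<le> q" using r12 q0 r1pos by (simp add: field_simps)
      then have "(1 / r1) ^ n \<le> q ^ n" using r1pos by (intro power_mono) auto
      then have "C * (1 / r1) ^ n \<le> C * q ^ n" using C0 by (intro mult_left_mono) auto
      then show ?thesis by (simp add: power_divide)
    qed
    have "norm (Kf $ n) \<le> norm (Kf $ n + (\<Sum>\<zeta>\<in>S. residue (\<lambda>w. H w / w ^ Suc n) \<zeta>))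
                          + norm (\<Sum>\<zeta>\<in>S. residue (\<lambda>w. H w / w ^ Suc n) \<zeta>)"
      by (metis add_diff_cancel_right' norm_triangle_ineq4)
    with b1 b2 b3 show ?thesis by (simp add: algebra_simps)
  qed
  show ?thesis
  proof (rule that[of "C + W + 1"])
    show "C + W + 1 > 0" using C0 W0 by simp
    fix n
    show "real (Lam n) \<le> (C + W + 1) * q ^ n"
    proof (cases "n = 0")
      case True then show ?thesis using C0 W0 q0 by (simp add: Lam0)
    next
      case False
      have "Kf $ n = of_real (real (Lam n) - q ^ n)" using False by (simp add: Kf_nth)
      then have "norm (Kf $ n) = \<bar>real (Lam n) - q ^ n\<bar>" by (simp only: norm_of_real)
      then have "real (Lam n) - q ^ n \<le> (C + W) * q ^ n" using Kbound[of n] by linarith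
      then show ?thesis by (simp add: algebra_simps)
    qed
  qed
qed

end

lemma poly_exp_lim:
  fixes q :: real
  assumes "q > 1"
  shows "(\<lambda>k. (real k + 1) ^ p / q ^ k) \<longlonglongrightarrow> 0"
proof (cases "p = 0")
  case True
  have "(\<lambda>k. (1 / q) ^ k) \<longlonglongrightarrow> 0" using assms by (intro LIMSEQ_power_zero) simp
  then show ?thesis using True by (simp add: power_divide)
next
  case False
  define s where "s = q powr (1 / real p)"
  have s1: "s > 1" using assms False powr_less_mono[of 0 "1 / real p" q] by (simp add: s_def)
  have sp: "s ^ p = q" using assms False
    by (simp add: s_def powr_realpow[symmetric] powr_powr)
  have "(\<lambda>k. of_nat k * (1 / s) ^ k) \<longlonglongrightarrow> (0::real)"
    using s1 by (intro powser_times_n_limit_0) simp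
  moreover have "(\<lambda>k. (1 / s) ^ k) \<longlonglongrightarrow> (0::real)" using s1 by (intro LIMSEQ_power_zero) simp
  ultimately have "(\<lambda>k. of_nat k * (1 / s) ^ k + (1 / s) ^ k) \<longlonglongrightarrow> (0::real)"
    using tendsto_add by fastforce
  moreover have "(\<lambda>k. of_nat k * (1 / s) ^ k + (1 / s) ^ k) = (\<lambda>k. (real k + 1) / s ^ k)"
    by (rule ext) (simp add: power_divide add_divide_distrib)
  ultimately have "(\<lambda>k. (real k + 1) / s ^ k) \<longlonglongrightarrow> 0" by simp
  then have lim: "(\<lambda>k. ((real k + 1) / s ^ k) ^ p) \<longlonglongrightarrow> 0 ^ p" by (intro tendsto_power)
  have eq: "((real k + 1) / s ^ k) ^ p = (real k + 1) ^ p / q ^ k" for k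
    by (simp add: power_divide power_mult[symmetric] mult.commute[of k p] power_mult sp)
  have "(\<lambda>k. ((real k + 1) / s ^ k) ^ p) = (\<lambda>k. (real k + 1) ^ p / q ^ k)"
    by (rule ext) (rule eq)
  with lim False show ?thesis by (simp add: power_0_left)
qed

context aas_an begin

lemma q0: "q > 0" using q_gt by simp

lemma N_lim: "(\<lambda>k. real (N m k) / q ^ k) \<longlonglongrightarrow> 0"
proof (rule tendsto_sandwich[of "\<lambda>_. 0" _ _ "\<lambda>k. (real k + 1) ^ card (Ple m) / q ^ k"])
  show "eventually (\<lambda>k. 0 \<le> real (N m k) / q ^ k) sequentially" using q0 by simp
  show "eventually (\<lambda>k. real (N m k) / q ^ k \<le> (real k + 1) ^ card (Ple m) / q ^ k) sequentially"
  proof (intro always_eventually allI divide_right_mono)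
    fix k
    have "real (N m k) \<le> real ((k + 1) ^ card (Ple m))" using N_poly by (simp only: of_nat_le_iff)
    then show "real (N m k) \<le> (real k + 1) ^ card (Ple m)" by (simp add: add.commute)
  qed (use q0 in simp)
  show "(\<lambda>k. (real k + 1) ^ card (Ple m) / q ^ k) \<longlonglongrightarrow> 0" by (rule poly_exp_lim[OF q_gt])
qed simp

lemma N_lim_shift: "(\<lambda>n. real (N m (n - j)) / q ^ n) \<longlonglongrightarrow> 0"
proof (rule LIMSEQ_offset[where k = j])
  have "(\<lambda>n. real (N m n) / q ^ n / q ^ j) \<longlonglongrightarrow> 0 / q ^ j"
    by (intro tendsto_divide N_lim tendsto_const) (use q0 in simp)
  then show "(\<lambda>n. real (N m (n + j - j)) / q ^ (n + j)) \<longlonglongrightarrow> 0"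
    by (simp add: power_add field_simps)
qed

lemma pi_bound: obtains D where "D > 0" "\<And>m. m \<ge> 1 \<Longrightarrow> real (card (PS m)) \<le> D * q ^ m / real m"
proof -
  obtain D where D: "D > 0" "\<And>n. real (Lam n) \<le> D * q ^ n" using Lam_bound by blast
  have "real (card (PS m)) \<le> D * q ^ m / real m" if "m \<ge> 1" for m
  proof -
    have "real m * real (card (PS m)) \<le> real (Lam m)" using Lam_ge[of m] by (simp only: of_nat_mult[symmetric] of_nat_le_iff)
    also have "\<dots> \<le> D * q ^ m" by (rule D(2))
    finally show ?thesis using that by (simp add: field_simps)
  qed
  with D(1) that show ?thesis by blast
qed

definition P2 :: "nat \<Rightarrow> real" where
  "P2 n = (\<Sum>m\<in>{1..n}. real (card (PS m)) ^ 2 * (if 2 * m \<le> n then real (N m (n - 2 * m)) else 0))"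

lemma P2_lim: "(\<lambda>n. P2 n / q ^ n) \<longlonglongrightarrow> 0"
proof -
  obtain D where D: "D > 0" "\<And>m. m \<ge> 1 \<Longrightarrow> real (card (PS m)) \<le> D * q ^ m / real m"
    using pi_bound by blast
  obtain B where B: "B > 0" "\<And>n. real (G n) \<le> B * q ^ n" using G_bound by blast
  define a where "a m n = (if 1 \<le> m \<and> 2 * m \<le> n then real (card (PS m)) ^ 2 * real (N m (n - 2 * m)) / q ^ n else 0)" for m n
  define M where "M m = D ^ 2 * B * inverse (real m ^ 2)" for m
  have eq: "P2 n / q ^ n = suminf (\<lambda>m. a m n)" for n
  proof -
    have "suminf (\<lambda>m. a m n) = (\<Sum>m\<in>{1..n}. a m n)"
      by (rule suminf_finite) (auto simp: a_def)
    also have "\<dots> = P2 n / q ^ n" unfolding P2_def sum_divide_distrib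
      by (rule sum.cong) (auto simp: a_def)
    finally show ?thesis by simp
  qed
  have lim: "(\<lambda>n. a m n) \<longlonglongrightarrow> 0" for m
  proof (cases "1 \<le> m")
    case True
    have "(\<lambda>n. real (card (PS m)) ^ 2 * (real (N m (n - 2 * m)) / q ^ n)) \<longlonglongrightarrow> real (card (PS m)) ^ 2 * 0"
      by (intro tendsto_mult tendsto_const N_lim_shift)
    then have "(\<lambda>n. real (card (PS m)) ^ 2 * (real (N m (n - 2 * m)) / q ^ n)) \<longlonglongrightarrow> 0" by simp
    moreover have "eventually (\<lambda>n. real (card (PS m)) ^ 2 * (real (N m (n - 2 * m)) / q ^ n) = a m n) sequentially"
      using eventually_ge_at_top[of "2 * m"] by eventually_elim (use True in \<open>simp add: a_def\<close>)
    ultimately show ?thesis by (rule Lim_transform_eventually)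
  next
    case False then show ?thesis by (simp add: a_def)
  qed
  have bound: "norm (a m n) \<le> M m" for m n
  proof (cases "1 \<le> m \<and> 2 * m \<le> n")
    case True
    have pm: "real (card (PS m)) ^ 2 \<le> (D * q ^ m / real m) ^ 2"
      using D(2)[of m] True by (intro power_mono) auto
    have nm: "real (N m (n - 2 * m)) \<le> B * q ^ (n - 2 * m)"
      using N_le_G[of m "n - 2 * m"] B(2)[of "n - 2 * m"] by (meson of_nat_le_iff order_trans)
    have qn: "q ^ n = q ^ (2 * m) * q ^ (n - 2 * m)" using True by (simp add: power_add[symmetric])
    have "a m n = real (card (PS m)) ^ 2 * real (N m (n - 2 * m)) / q ^ n" using True by (simp add: a_def)
    also have "\<dots> \<le> (D * q ^ m / real m) ^ 2 * (B * q ^ (n - 2 * m)) / q ^ n"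
      using pm nm q0 by (intro divide_right_mono mult_mono) auto
    also have "\<dots> = M m" using q0 True
      by (simp add: M_def qn power_mult_distrib power_divide power_mult field_simps mult.commute[of 2 m])
    finally show ?thesis using True q0 by (simp add: a_def)
  next
    case False
    then have "a m n = 0" unfolding a_def by auto
    moreover have "M m \<ge> 0" using D B by (simp add: M_def)
    ultimately show ?thesis by simp
  qed
  have summ: "summable M" unfolding M_def
    by (intro summable_mult inverse_power_summable) simp
  have "(\<lambda>n. suminf (\<lambda>m. a m n)) \<longlonglongrightarrow> suminf (\<lambda>m. 0::real)"
    using tannerys_theorem[of a "\<lambda>_. 0" sequentially M] lim bound summ by (auto intro: always_eventually)
  then show ?thesis by (simp add: eq)
qed

end

context aas_an begin

definition TT :: "'p set \<Rightarrow> nat \<Rightarrow> real" where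
  "TT S n = (\<Sum>g\<in>Gs n. real (QS dp S g))"

lemma TT_formula: "TT S n = (\<Sum>m\<in>{1..n}. real (card (PSS S m)) * real (N m (n - m)))"
proof -
  have "TT S n = real (\<Sum>g\<in>Gs n. QS dp S g)" by (simp add: TT_def)
  also have "\<dots> = real (\<Sum>m\<in>{1..n}. card (PSS S m) * N m (n - m))" by (simp only: T_formula)
  finally show ?thesis by simp
qed

lemma PSS_UNIV: "PSS UNIV m = PS m" by (simp add: PSS_def PS_def)

lemma T_G_lim: "(\<lambda>n. (TT UNIV n - real (G n)) / q ^ n) \<longlonglongrightarrow> 0"
proof (rule tendsto_sandwich[of "\<lambda>_. 0" _ _ "\<lambda>n. P2 n / q ^ n"])
  have b: "0 \<le> TT UNIV n - real (G n) \<and> TT UNIV n - real (G n) \<le> P2 n" if n: "n \<ge> 1" for n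
  proof -
    have Gs: "real (G n) = (\<Sum>g\<in>Gs n. 1)" by (simp add: G_def)
    have d: "TT UNIV n - real (G n) = (\<Sum>g\<in>Gs n. real (QS dp UNIV g) - 1)"
      by (simp add: TT_def Gs sum_subtractf)
    have lo: "0 \<le> (\<Sum>g\<in>Gs n. real (QS dp UNIV g) - 1)"
      by (intro sum_nonneg) (use QS_pos n in force)
    have "(\<Sum>g\<in>Gs n. real (QS dp UNIV g) - 1) \<le> (\<Sum>g\<in>Gs n. real (QS dp UNIV g * (QS dp UNIV g - 1)))"
    proof (intro sum_mono)
      fix g assume g: "g \<in> Gs n"
      define Q where "Q = QS dp UNIV g"
      have "Q \<ge> 1" using QS_pos[OF g n] by (simp add: Q_def)
      then have e1: "real (Q * (Q - 1)) = real Q * (real Q - 1)" by (simp add: of_nat_diff)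
      have "(real Q - 1) * 1 \<le> (real Q - 1) * real Q" using \<open>Q \<ge> 1\<close> by (intro mult_left_mono) auto
      then have "real Q - 1 \<le> real Q * (real Q - 1)" by (simp add: mult.commute)
      then have "real Q - 1 \<le> real (Q * (Q - 1))" using e1 by linarith
      then show "real (QS dp UNIV g) - 1 \<le> real (QS dp UNIV g * (QS dp UNIV g - 1))" by (simp add: Q_def)
    qed
    also have "\<dots> = real (\<Sum>g\<in>Gs n. QS dp UNIV g * (QS dp UNIV g - 1))" by simp
    also have "\<dots> \<le> real (\<Sum>m\<in>{1..n}. card (PS m) ^ 2 * (if 2 * m \<le> n then N m (n - 2 * m) else 0))"
      using pairs_bound[of n] by (simp only: of_nat_le_iff)
    also have "\<dots> = P2 n" unfolding P2_def of_nat_sum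
      by (intro sum.cong refl) simp
    finally show ?thesis using d lo by simp
  qed
  show "eventually (\<lambda>n. 0 \<le> (TT UNIV n - real (G n)) / q ^ n) sequentially"
    using eventually_ge_at_top[of 1] by eventually_elim (use b q0 in simp)
  show "eventually (\<lambda>n. (TT UNIV n - real (G n)) / q ^ n \<le> P2 n / q ^ n) sequentially"
    using eventually_ge_at_top[of 1] by eventually_elim (use b q0 in \<open>simp add: divide_right_mono\<close>)
  show "(\<lambda>n. P2 n / q ^ n) \<longlonglongrightarrow> 0" by (rule P2_lim)
qed simp

lemma G_lim: "(\<lambda>n. (real (G n) - c * q ^ n) / q ^ n) \<longlonglongrightarrow> 0"
proof -
  obtain K where K: "K > 0" "eventually (\<lambda>n. \<bar>real (G n) - c * q ^ n\<bar> \<le> K * rho ^ n) sequentially"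
    using Asharp_ev by blast
  have "(\<lambda>n. K * (rho / q) ^ n) \<longlonglongrightarrow> K * 0"
    using rho_lt rho_ge1 by (intro tendsto_mult tendsto_const LIMSEQ_power_zero) simp
  then have lim: "(\<lambda>n. K * (rho / q) ^ n) \<longlonglongrightarrow> 0" by simp
  show ?thesis
  proof (rule Lim_null_comparison[OF _ lim])
    show "eventually (\<lambda>n. norm ((real (G n) - c * q ^ n) / q ^ n) \<le> K * (rho / q) ^ n) sequentially"
      using K(2) by eventually_elim (use q0 in \<open>simp add: power_divide divide_right_mono\<close>)
  qed
qed

lemma T_lim: "(\<lambda>n. TT UNIV n / q ^ n) \<longlonglongrightarrow> c"
proof -
  have "(\<lambda>n. (TT UNIV n - real (G n)) / q ^ n + (real (G n) - c * q ^ n) / q ^ n + c) \<longlonglongrightarrow> 0 + 0 + c"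
    by (intro tendsto_add T_G_lim G_lim tendsto_const)
  moreover have "(TT UNIV n - real (G n)) / q ^ n + (real (G n) - c * q ^ n) / q ^ n + c = TT UNIV n / q ^ n" for n
    using q0 by (simp add: field_simps)
  ultimately show ?thesis by simp
qed

lemma main_lim:
  assumes dens: "has_natural_density dp S \<delta>"
  shows "(\<lambda>n. (TT S n - \<delta> * TT UNIV n) / q ^ n) \<longlonglongrightarrow> 0"
proof -
  have "convergent (\<lambda>n. TT UNIV n / q ^ n)" using T_lim by (auto simp: convergent_def)
  from convergent_imp_Bseq[OF this] obtain K1 where K1: "K1 > 0" "\<And>n. norm (TT UNIV n / q ^ n) \<le> K1"
    by (rule BseqE) blast
  define x where "x m = real (card (PSS S m)) - \<delta> * real (card (PS m))" for m
  have PSS_sub: "card (PSS S m) \<le> card (PS m)" for m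
    by (rule card_mono[OF finite_PS]) (auto simp: PSS_def PS_def)
  have diff: "TT S n - \<delta> * TT UNIV n = (\<Sum>m\<in>{1..n}. x m * real (N m (n - m)))" for n
  proof -
    have dd: "\<delta> * TT UNIV n = (\<Sum>m\<in>{1..n}. \<delta> * real (card (PS m)) * real (N m (n - m)))"
      by (simp add: TT_formula PSS_UNIV sum_distrib_left mult.assoc)
    have "TT S n - \<delta> * TT UNIV n = (\<Sum>m\<in>{1..n}. real (card (PSS S m)) * real (N m (n - m))
             - \<delta> * real (card (PS m)) * real (N m (n - m)))"
      by (subst dd) (simp only: TT_formula sum_subtractf)
    also have "\<dots> = (\<Sum>m\<in>{1..n}. x m * real (N m (n - m)))"
      by (intro sum.cong refl) (simp add: x_def left_diff_distrib)
    finally show ?thesis .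
  qed
  have dens': "(\<lambda>m. real (card (PSS S m)) / real (card (PS m))) \<longlonglongrightarrow> \<delta>"
    using dens by (simp add: has_natural_density_def PSS_def Pcount_eq)
  show ?thesis
    unfolding tendsto_iff
  proof (intro allI impI)
    fix \<epsilon> :: real assume \<epsilon>: "\<epsilon> > 0"
    define \<epsilon>1 where "\<epsilon>1 = \<epsilon> / (2 * (K1 + 1))"
    have \<epsilon>1: "\<epsilon>1 > 0" using \<epsilon> K1 by (simp add: \<epsilon>1_def)
    from dens' \<epsilon>1 have "eventually (\<lambda>m. dist (real (card (PSS S m)) / real (card (PS m))) \<delta> < \<epsilon>1) sequentially"
      by (simp add: tendsto_iff)
    then obtain M where M: "\<And>m. m \<ge> M \<Longrightarrow> \<bar>real (card (PSS S m)) / real (card (PS m)) - \<delta>\<bar> < \<epsilon>1"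
      by (auto simp: eventually_sequentially dist_real_def)
    have xb: "\<bar>x m\<bar> \<le> \<epsilon>1 * real (card (PS m))" if "m \<ge> M" for m
    proof (cases "card (PS m) = 0")
      case True
      then have "card (PSS S m) = 0" using PSS_sub[of m] by simp
      then show ?thesis using True by (simp add: x_def)
    next
      case False
      then have pos: "real (card (PS m)) > 0" by linarith
      have "x m = real (card (PS m)) * (real (card (PSS S m)) / real (card (PS m)) - \<delta>)"
        using pos False by (simp add: x_def right_diff_distrib mult.commute[of "real (card (PS m))"])
      then have "\<bar>x m\<bar> = real (card (PS m)) * \<bar>real (card (PSS S m)) / real (card (PS m)) - \<delta>\<bar>"
        using pos by (simp add: abs_mult)
      also have "\<dots> \<le> real (card (PS m)) * \<epsilon>1" using M[OF that] pos by (intro mult_left_mono) auto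
      finally show ?thesis by (simp add: mult.commute)
    qed
    define Fs where "Fs n = (\<Sum>m\<in>{..<M}. \<bar>x m\<bar> * (real (N m (n - m)) / q ^ n))" for n
    have Flim: "Fs \<longlonglongrightarrow> 0" unfolding Fs_def
      by (intro tendsto_null_sum tendsto_mult_right_zero N_lim_shift)
    then have "eventually (\<lambda>n. dist (Fs n) 0 < \<epsilon> / 2) sequentially" using \<epsilon>
      unfolding tendsto_iff by (meson half_gt_zero)
    then have "eventually (\<lambda>n. \<bar>Fs n\<bar> < \<epsilon> / 2) sequentially"
      by (simp add: dist_real_def)
    then show "eventually (\<lambda>n. dist ((TT S n - \<delta> * TT UNIV n) / q ^ n) 0 < \<epsilon>) sequentially"
    proof eventually_elim
      case (elim n)
      have "\<bar>TT S n - \<delta> * TT UNIV n\<bar> \<le> (\<Sum>m\<in>{1..n}. \<bar>x m\<bar> * real (N m (n - m)))"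
        unfolding diff by (rule order_trans[OF sum_abs]) (simp add: abs_mult)
      also have "\<dots> \<le> (\<Sum>m\<in>{1..n}. (if m < M then \<bar>x m\<bar> * real (N m (n - m)) else 0)
                      + \<epsilon>1 * (real (card (PS m)) * real (N m (n - m))))"
      proof (intro sum_mono)
        fix m assume "m \<in> {1..n}"
        show "\<bar>x m\<bar> * real (N m (n - m)) \<le> (if m < M then \<bar>x m\<bar> * real (N m (n - m)) else 0)
                      + \<epsilon>1 * (real (card (PS m)) * real (N m (n - m)))"
        proof (cases "m < M")
          case True then show ?thesis using \<epsilon>1 by simp
        next
          case False
          then have "\<bar>x m\<bar> * real (N m (n - m)) \<le> \<epsilon>1 * real (card (PS m)) * real (N m (n - m))"
            using xb[of m] by (intro mult_right_mono) auto
          then show ?thesis using False by simp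
        qed
      qed
      also have "\<dots> = (\<Sum>m\<in>{1..n}. (if m < M then \<bar>x m\<bar> * real (N m (n - m)) else 0)) + \<epsilon>1 * TT UNIV n"
        by (simp only: sum.distrib sum_distrib_left[symmetric] TT_formula PSS_UNIV)
      also have "(\<Sum>m\<in>{1..n}. (if m < M then \<bar>x m\<bar> * real (N m (n - m)) else 0))
                 \<le> (\<Sum>m\<in>{..<M}. \<bar>x m\<bar> * real (N m (n - m)))"
      proof -
        have "(\<Sum>m\<in>{1..n}. (if m < M then \<bar>x m\<bar> * real (N m (n - m)) else 0))
              = (\<Sum>m\<in>{1..n} \<inter> {..<M}. \<bar>x m\<bar> * real (N m (n - m)))"
          by (simp add: sum.If_cases Int_def)
        also have "\<dots> \<le> (\<Sum>m\<in>{..<M}. \<bar>x m\<bar> * real (N m (n - m)))"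
          by (rule sum_mono2) auto
        finally show ?thesis .
      qed
      finally have b: "\<bar>TT S n - \<delta> * TT UNIV n\<bar> \<le> (\<Sum>m\<in>{..<M}. \<bar>x m\<bar> * real (N m (n - m))) + \<epsilon>1 * TT UNIV n"
        by simp
      have qn: "q ^ n > 0" using q0 by simp
      have "\<bar>(TT S n - \<delta> * TT UNIV n) / q ^ n\<bar> \<le> Fs n + \<epsilon>1 * (TT UNIV n / q ^ n)"
      proof -
        have "\<bar>(TT S n - \<delta> * TT UNIV n) / q ^ n\<bar> = \<bar>TT S n - \<delta> * TT UNIV n\<bar> / q ^ n"
          using qn by (simp add: abs_divide)
        also have "\<dots> \<le> ((\<Sum>m\<in>{..<M}. \<bar>x m\<bar> * real (N m (n - m))) + \<epsilon>1 * TT UNIV n) / q ^ n"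
          using b qn by (intro divide_right_mono) auto
        also have "\<dots> = Fs n + \<epsilon>1 * (TT UNIV n / q ^ n)"
          by (simp add: Fs_def add_divide_distrib sum_divide_distrib)
        finally show ?thesis .
      qed
      also have "\<dots> \<le> \<bar>Fs n\<bar> + \<epsilon>1 * K1"
      proof -
        have k: "TT UNIV n / q ^ n \<le> K1" using K1(2)[of n] abs_le_D1 real_norm_def by metis
        show ?thesis by (intro add_mono mult_left_mono k) (use \<epsilon>1 in auto)
      qed
      also have "\<dots> < \<epsilon> / 2 + \<epsilon> / 2"
      proof -
        have "\<epsilon>1 * K1 < \<epsilon> / 2" using \<epsilon> K1 by (simp add: \<epsilon>1_def field_simps)
        then show ?thesis using elim by simp
      qed
      finally show ?case by (simp add: dist_real_def)
    qed
  qed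
qed

end

theorem lemma2p1:
  fixes dp :: "'p \<Rightarrow> nat" and c q \<eta> \<delta> :: real and S :: "'p set"
  assumes deg_pos: "\<And>P. dp P > 0"
    and fin: "\<And>n. finite {g. degG dp g = n}"
    and c_pos: "c > 0" and q_gt: "q > 1" and eta: "0 \<le> \<eta>" "\<eta> < 1"
    and Asharp: "(\<lambda>n. real (Gcount dp n) - c * q ^ n) \<in> O(\<lambda>n. q powr (\<eta> * real n))"
    and Z_nonzero: "\<exists>r > 1 / q. \<exists>F. F holomorphic_on (ball 0 r - {complex_of_real (1 / q)})
                      \<and> (\<forall>z \<in> ball 0 (1 / q). F z = ZG dp z)
                      \<and> F (complex_of_real (- 1 / q)) \<noteq> 0"
    and dens: "has_natural_density dp S \<delta>"
  shows "(\<lambda>n. (\<Sum>g\<in>{g. degG dp g = n}. real (QS dp S g)) - c * \<delta> * q ^ n) \<in> o(\<lambda>n. q ^ n)"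
proof -
  interpret aas_an dp c q \<eta>
    by unfold_locales (use deg_pos fin q_gt eta Asharp in auto)
  have eqsum: "(\<Sum>g\<in>{g. degG dp g = n}. real (QS dp S g)) = TT S n" for n
    by (simp add: TT_def Gs_def)
  have "(\<lambda>n. (TT S n - \<delta> * TT UNIV n) / q ^ n + \<delta> * ((TT UNIV n - real (G n)) / q ^ n)
             + \<delta> * ((real (G n) - c * q ^ n) / q ^ n)) \<longlonglongrightarrow> 0 + \<delta> * 0 + \<delta> * 0"
    by (intro tendsto_add tendsto_mult tendsto_const main_lim[OF dens] T_G_lim G_lim)
  moreover have "(TT S n - \<delta> * TT UNIV n) / q ^ n + \<delta> * ((TT UNIV n - real (G n)) / q ^ n)
             + \<delta> * ((real (G n) - c * q ^ n) / q ^ n)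
           = ((\<Sum>g\<in>{g. degG dp g = n}. real (QS dp S g)) - c * \<delta> * q ^ n) / q ^ n" for n
    using q0 by (simp add: eqsum field_simps)
  ultimately have "(\<lambda>n. ((\<Sum>g\<in>{g. degG dp g = n}. real (QS dp S g)) - c * \<delta> * q ^ n) / q ^ n) \<longlonglongrightarrow> 0"
    by simp
  then show ?thesis
    by (rule smalloI_tendsto) (use q0 in simp)
qed


end
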